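(* Let $n\ge2$, let $\mathbf{x}=(x_1,\dots,x_n)^T\in\mathbb{C}^n$ with $x_i\neq x_j$ for all $i\neq j$, let $F$, $p$ and $F''$ be as in the context, and put \[ W_l=\frac{p(x_l)}{\prod_{j=1,\,j\neq l}^n(x_l-x_j)},\qquad l=1,\dots,n,\qquad \mathbf{d}=F'(\mathbf{x})^{-1}F(\mathbf{x}). \] Then $\mathbf{d}=(W_1,\dots,W_n)^T$ and, for $j=1,\dots,n$, \[ \Big(F'(\mathbf{x})^{-1}\,F''(\mathbf{x})(\mathbf{d},\mathbf{d})\Big)_j=2\,W_j\sum_{\nu=1,\,\nu\neq j}^n\frac{W_\nu}{x_\nu-x_j}. \]
   Context: Let $p(t)=t^n+a_{n-1}t^{n-1}+\dots+a_1t+a_0$ be a monic polynomial of degree $n$ with real coefficients, and set $\mathbf{a}=(a_0,a_1,\dots,a_{n-1})^T$. Define $V=(v_1,\dots,v_n)^T:\mathbb{C}^n\to\mathbb{C}^n$ by \[ v_{n-\nu+1}(\mathbf{x})=\sum_{i_1<i_2<\dots<i_\nu}(-x_{i_1})(-x_{i_2})\cdots(-x_{i_\nu}),\qquad \nu=1,\dots,n, \] (the sum running over all $\nu$-element index sets $\{i_1<\dots<i_\nu\}\subseteq\{1,\dots,n\}$), so that $\prod_{j=1}^n(t-x_j)=t^n+\sum_{j=0}^{n-1}v_{j+1}(\mathbf{x})t^j$. Define $F=(f_1,\dots,f_n)^T:\mathbb{C}^n\to\mathbb{C}^n$ by $F(\mathbf{x})=V(\mathbf{x})-\mathbf{a}$,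 with Jacobian $F'(\mathbf{x})$. For $k=1,\dots,n$, $A^{(k)}(\mathbf{x})\in\mathbb{C}^{n\times n}$ is the matrix whose $(i,l)$ entry is $\partial^2 f_i(\mathbf{x})/\partial x_l\partial x_k$, and the second derivative is the bilinear map $F''(\mathbf{x})(\mathbf{y},\mathbf{z})=\sum_{k=1}^n z_k\,A^{(k)}(\mathbf{x})\,\mathbf{y}$ for $\mathbf{y},\mathbf{z}\in\mathbb{C}^n$, i.e. $F''(\mathbf{x})(\mathbf{y},\mathbf{z})_i=\sum_{k,l}\frac{\partial^2 f_i(\mathbf{x})}{\partial x_l\partial x_k}y_l z_k$. *)

theory Defs
  imports "HOL-Analysis.Analysis" "Jordan_Normal_Form.Matrix"
begin

(* Indices are 0-based: paper index i corresponds to i-1 here.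
   Points x in C^n are functions nat => complex; only x 0 .. x (n-1) matter. *)

(* V component k (0-based, k < n) = paper's v_{k+1} = coefficient of t^k,
   i.e. paper's v_{n-nu+1} with nu = n - k: sum over nu-element index sets. *)
definition Vmap :: "nat \<Rightarrow> (nat \<Rightarrow> complex) \<Rightarrow> nat \<Rightarrow> complex" where
  "Vmap n x k = (\<Sum>S\<in>{S. S \<subseteq> {0..<n} \<and> card S = n - k}. \<Prod>i\<in>S. - x i)"

definition Fmap :: "nat \<Rightarrow> (nat \<Rightarrow> real) \<Rightarrow> (nat \<Rightarrow> complex) \<Rightarrow> nat \<Rightarrow> complex" where
  "Fmap n a x k = Vmap n x k - of_real (a k)"

definition ppoly :: "nat \<Rightarrow> (nat \<Rightarrow> real) \<Rightarrow> complex \<Rightarrow> complex" where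
  "ppoly n a t = t ^ n + (\<Sum>j<n. of_real (a j) * t ^ j)"

definition partial :: "((nat \<Rightarrow> complex) \<Rightarrow> complex) \<Rightarrow> nat \<Rightarrow> (nat \<Rightarrow> complex) \<Rightarrow> complex" where
  "partial g l x = deriv (\<lambda>t. g (x(l := t))) (x l)"

definition jac :: "nat \<Rightarrow> (nat \<Rightarrow> real) \<Rightarrow> (nat \<Rightarrow> complex) \<Rightarrow> complex mat" where
  "jac n a x = mat n n (\<lambda>(i, l). partial (\<lambda>y. Fmap n a y i) l x)"

definition hess :: "nat \<Rightarrow> (nat \<Rightarrow> real) \<Rightarrow> (nat \<Rightarrow> complex) \<Rightarrow> complex vec \<Rightarrow> complex vec \<Rightarrow> complex vec" where
  "hess n a x y z = vec n (\<lambda>i. \<Sum>k<n. \<Sum>l<n.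
      partial (\<lambda>w. partial (\<lambda>u. Fmap n a u i) k w) l x * (y $ l) * (z $ k))"

definition Wgt :: "nat \<Rightarrow> (nat \<Rightarrow> real) \<Rightarrow> (nat \<Rightarrow> complex) \<Rightarrow> nat \<Rightarrow> complex" where
  "Wgt n a x l = ppoly n a (x l) / (\<Prod>j\<in>{0..<n} - {l}. (x l - x j))"

end

theory Submission imports Defs "Jordan_Normal_Form.Determinant" "HOL-Computational_Algebra.Polynomial" begin

definition Q :: "(nat \<Rightarrow> complex) \<Rightarrow> nat set \<Rightarrow> complex poly" where
  "Q w A = (\<Prod>j\<in>A. [:- w j, 1:])"

lemma prod_const_poly: "(\<Prod>x\<in>X. [:f x:]) = [:\<Prod>x\<in>X. f x:]"
  by (induction X rule: infinite_finite_induct) (auto simp: mult.commute)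

lemma Q_expand: assumes "finite A"
  shows "Q w A = (\<Sum>X\<in>Pow A. monom (\<Prod>x\<in>X. - w x) (card (A - X)))"
proof -
  have "Q w A = (\<Prod>j\<in>A. [:- w j:] + [:0,1:])" unfolding Q_def by (intro prod.cong) auto
  also have "\<dots> = (\<Sum>X\<in>Pow A. (\<Prod>x\<in>X. [:- w x:]) * (\<Prod>x\<in>A-X. [:0,1:]))"
    by (rule prod_add[OF assms])
  also have "\<dots> = (\<Sum>X\<in>Pow A. monom (\<Prod>x\<in>X. - w x) (card (A - X)))"
    by (intro sum.cong refl) (simp add: prod_const_poly monom_altdef)
  finally show ?thesis .
qed

lemma Vmap_coeff: assumes "k \<le> n" shows "Vmap n w k = coeff (Q w {0..<n}) k"
proof -
  have "coeff (Q w {0..<n}) k = (\<Sum>X\<in>Pow {0..<n}. if card ({0..<n} - X) = k then (\<Prod>x\<in>X. - w x) else 0)"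
    unfolding Q_expand[OF finite_atLeastLessThan] coeff_sum coeff_monom
    by (auto intro!: sum.cong)
  also have "\<dots> = (\<Sum>X\<in>{X\<in>Pow {0..<n}. card ({0..<n} - X) = k}. (\<Prod>x\<in>X. - w x))"
    by (rule sum.inter_filter[symmetric]) simp
  also have "{X\<in>Pow {0..<n}. card ({0..<n} - X) = k} = {S. S \<subseteq> {0..<n} \<and> card S = n - k}"
  proof -
    { fix X assume X: "X \<subseteq> {0..<n}"
      then have "finite X" using finite_subset by blast
      have c: "card ({0..<n} - X) = n - card X" using X \<open>finite X\<close> by (simp add: card_Diff_subset)
      have "card X \<le> n" using X card_mono[of "{0..<n}" X] by auto
      then have "(card ({0..<n} - X) = k) = (card X = n - k)" using c assms by auto }
    then show ?thesis by auto
  qed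
  finally show ?thesis unfolding Vmap_def by simp
qed

lemma Q_upd_notin: "l \<notin> A \<Longrightarrow> Q (w(l:=t)) A = Q w A"
  unfolding Q_def by (intro prod.cong) auto

lemma Q_split: "finite A \<Longrightarrow> l \<in> A \<Longrightarrow> Q w A = [:-w l,1:] * Q w (A-{l})"
  unfolding Q_def by (simp add: prod.remove)

lemma coeff_lin: fixes R :: "complex poly" shows "coeff ([:-t,1:] * R) i = coeff (pCons 0 R) i - t * coeff R i"
  by (simp add: algebra_simps)

lemma Q_upd_eq: assumes "finite A" "l \<in> A"
  shows "coeff (Q (w(l:=t)) A) i = coeff (pCons 0 (Q w (A-{l}))) i - t * coeff (Q w (A-{l})) i"
proof -
  have "Q (w(l:=t)) A = [:-t,1:] * Q (w(l:=t)) (A-{l})" using Q_split[OF assms] by simp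
  also have "Q (w(l:=t)) (A-{l}) = Q w (A-{l})" by (rule Q_upd_notin) simp
  finally show ?thesis by (simp only: coeff_lin)
qed

lemma deriv_coeffQ: assumes "finite A" "l \<in> A"
  shows "((\<lambda>t. coeff (Q (w(l:=t)) A) i) has_field_derivative - coeff (Q w (A-{l})) i) (at s)"
proof -
  have "((\<lambda>t. coeff (pCons 0 (Q w (A-{l}))) i - t * coeff (Q w (A-{l})) i) has_field_derivative - coeff (Q w (A-{l})) i) (at s)"
    by (auto intro!: derivative_eq_intros)
  then show ?thesis unfolding Q_upd_eq[OF assms] .
qed

lemma partial_F: assumes "l < n" "k < n"
  shows "partial (\<lambda>y. Fmap n a y k) l w = - coeff (Q w ({0..<n}-{l})) k"
proof -
  have "((\<lambda>t. Fmap n a (w(l:=t)) k) has_field_derivative - coeff (Q w ({0..<n}-{l})) k) (at (w l))"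
    unfolding Fmap_def Vmap_coeff[OF less_imp_le[OF assms(2)]]
    using assms by (auto intro!: derivative_eq_intros deriv_coeffQ)
  then show ?thesis unfolding partial_def by (rule DERIV_imp_deriv)
qed

lemma partial2_F: assumes "l < n" "k < n" "i < n"
  shows "partial (\<lambda>w. partial (\<lambda>u. Fmap n a u i) k w) l x
     = (if l = k then 0 else coeff (Q x ({0..<n}-{k}-{l})) i)"
proof (cases "l = k")
  case True
  have "(\<lambda>t. partial (\<lambda>u. Fmap n a u i) k (x(l:=t))) = (\<lambda>t. - coeff (Q x ({0..<n}-{k})) i)"
    using True by (simp add: partial_F assms Q_upd_notin)
  then show ?thesis unfolding partial_def using True by simp
next
  case False
  have "((\<lambda>t. partial (\<lambda>u. Fmap n a u i) k (x(l:=t))) has_field_derivative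
      coeff (Q x ({0..<n}-{k}-{l})) i) (at (x l))"
    unfolding partial_F[OF assms(2,3)]
    using assms False by (auto intro!: derivative_eq_intros deriv_coeffQ)
  then show ?thesis unfolding partial_def using False by (simp add: DERIV_imp_deriv)
qed

lemma degree_Q: "finite A \<Longrightarrow> degree (Q w A) = card A"
  unfolding Q_def by (subst degree_prod_eq_sum_degree) auto

lemma lead_Q: "coeff (Q w A) (card A) = 1"
proof (cases "finite A")
  case True
  then show ?thesis using lead_coeff_prod[of "\<lambda>j. [:- w j, 1:]" A] degree_Q[OF True, of w]
    unfolding Q_def by simp
next
  case False then show ?thesis by (simp add: Q_def)
qed

lemma poly_Q: "poly (Q w A) t = (\<Prod>j\<in>A. t - w j)"
  unfolding Q_def poly_prod by simp

lemma poly_sum_coeff: fixes p :: "complex poly" assumes "degree p < n" shows "poly p t = (\<Sum>i<n. coeff p i * t^i)"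
proof -
  have "poly p t = (\<Sum>i\<le>degree p. coeff p i * t^i)" by (rule poly_altdef)
  also have "\<dots> = (\<Sum>i<n. coeff p i * t^i)"
    using assms by (intro sum.mono_neutral_left) (auto simp: coeff_eq_0)
  finally show ?thesis .
qed


definition EV :: "nat \<Rightarrow> complex vec \<Rightarrow> complex \<Rightarrow> complex" where
  "EV n v t = (\<Sum>i<n. v $ i * t ^ i)"

lemma jac_carrier: "jac n a x \<in> carrier_mat n n"
  unfolding jac_def by simp

lemma jac_mult: assumes "y \<in> carrier_vec n" "i < n"
  shows "(jac n a x *\<^sub>v y) $ i = (\<Sum>l<n. - coeff (Q x ({0..<n}-{l})) i * y $ l)"
  using assms unfolding jac_def
  by (simp add: scalar_prod_def partial_F atLeast0LessThan)

lemma poly_Q_sum: assumes "l < n"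
  shows "poly (Q x ({0..<n}-{l})) t = (\<Sum>i<n. coeff (Q x ({0..<n}-{l})) i * t^i)"
  using assms by (intro poly_sum_coeff) (simp add: degree_Q)

lemma EV_J: assumes "y \<in> carrier_vec n"
  shows "EV n (jac n a x *\<^sub>v y) t = - (\<Sum>l<n. y $ l * poly (Q x ({0..<n}-{l})) t)"
proof -
  have "EV n (jac n a x *\<^sub>v y) t = (\<Sum>i<n. (\<Sum>l<n. - coeff (Q x ({0..<n}-{l})) i * y $ l) * t^i)"
    unfolding EV_def using assms by (intro sum.cong refl) (simp add: jac_mult)
  also have "\<dots> = (\<Sum>i<n. \<Sum>l<n. - (y $ l * (coeff (Q x ({0..<n}-{l})) i * t^i)))"
    by (simp add: sum_distrib_left sum_distrib_right mult_ac)
  also have "\<dots> = (\<Sum>l<n. \<Sum>i<n. - (y $ l * (coeff (Q x ({0..<n}-{l})) i * t^i)))"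
    by (rule sum.swap)
  also have "\<dots> = - (\<Sum>l<n. y $ l * poly (Q x ({0..<n}-{l})) t)"
    by (simp add: sum_negf sum_distrib_left[symmetric] poly_Q_sum)
  finally show ?thesis .
qed

lemma EV_H: assumes "d \<in> carrier_vec n"
  shows "EV n (hess n a x d d) t = (\<Sum>k<n. \<Sum>l<n.
     (if l = k then 0 else poly (Q x ({0..<n}-{k}-{l})) t) * d $ l * d $ k)"
proof -
  have "EV n (hess n a x d d) t = (\<Sum>i<n. (\<Sum>k<n. \<Sum>l<n.
     (if l = k then 0 else coeff (Q x ({0..<n}-{k}-{l})) i) * d $ l * d $ k) * t^i)"
    unfolding EV_def hess_def by (intro sum.cong refl) (simp add: partial2_F)
  also have "\<dots> = (\<Sum>i<n. \<Sum>k<n. \<Sum>l<n.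
     (if l = k then 0 else coeff (Q x ({0..<n}-{k}-{l})) i * t^i) * d $ l * d $ k)"
    by (auto simp: sum_distrib_left sum_distrib_right mult_ac intro!: sum.cong)
  also have "\<dots> = (\<Sum>k<n. \<Sum>i<n. \<Sum>l<n.
     (if l = k then 0 else coeff (Q x ({0..<n}-{k}-{l})) i * t^i) * d $ l * d $ k)"
    by (rule sum.swap)
  also have "\<dots> = (\<Sum>k<n. \<Sum>l<n. \<Sum>i<n.
     (if l = k then 0 else coeff (Q x ({0..<n}-{k}-{l})) i * t^i) * d $ l * d $ k)"
    by (intro sum.cong refl sum.swap)
  also have "\<dots> = (\<Sum>k<n. \<Sum>l<n.
     (if l = k then 0 else poly (Q x ({0..<n}-{k}-{l})) t) * d $ l * d $ k)"
  proof (intro sum.cong refl)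
    fix k l assume k: "k \<in> {..<n}" and l: "l \<in> {..<n}"
    show "(\<Sum>i<n. (if l = k then 0 else coeff (Q x ({0..<n}-{k}-{l})) i * t^i) * d $ l * d $ k) =
      (if l = k then 0 else poly (Q x ({0..<n}-{k}-{l})) t) * d $ l * d $ k"
    proof (cases "l = k")
      case False
      have "degree (Q x ({0..<n}-{k}-{l})) < n" using k l False by (simp add: degree_Q)
      then show ?thesis using False
        by (simp add: poly_sum_coeff[of _ n] sum_distrib_right)
    qed simp
  qed
  finally show ?thesis .
qed

lemma EV_F: "EV n (vec n (Fmap n a x)) t = poly (Q x {0..<n}) t - ppoly n a t"
proof -
  have "poly (Q x {0..<n}) t = (\<Sum>i<Suc n. coeff (Q x {0..<n}) i * t^i)"
    by (intro poly_sum_coeff) (simp add: degree_Q)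
  also have "\<dots> = (\<Sum>i<n. coeff (Q x {0..<n}) i * t^i) + t^n"
    using lead_Q[of x "{0..<n}"] by simp
  finally have 1: "(\<Sum>i<n. coeff (Q x {0..<n}) i * t^i) = poly (Q x {0..<n}) t - t^n" by simp
  have "EV n (vec n (Fmap n a x)) t = (\<Sum>i<n. coeff (Q x {0..<n}) i * t^i - of_real (a i) * t^i)"
    unfolding EV_def by (intro sum.cong refl) (simp add: Fmap_def Vmap_coeff algebra_simps)
  also have "\<dots> = poly (Q x {0..<n}) t - ppoly n a t"
    unfolding sum_subtractf 1 ppoly_def by simp
  finally show ?thesis .
qed


lemma poly_Q_node: "finite A \<Longrightarrow> m \<in> A \<Longrightarrow> poly (Q x A) (x m) = 0"
  unfolding poly_Q by (rule prod_zero) auto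

lemma L_nz: assumes "\<And>i j. i < n \<Longrightarrow> j < n \<Longrightarrow> i \<noteq> j \<Longrightarrow> x i \<noteq> x j" "m < n"
  shows "poly (Q x ({0..<n}-{m})) (x m) \<noteq> 0"
  unfolding poly_Q using assms by (auto simp: prod_zero_iff)

lemma EV_J_node: assumes "y \<in> carrier_vec n" "m < n"
  shows "EV n (jac n a x *\<^sub>v y) (x m) = - (y $ m * poly (Q x ({0..<n}-{m})) (x m))"
proof -
  have "(\<Sum>l<n. y $ l * poly (Q x ({0..<n}-{l})) (x m)) =
     y $ m * poly (Q x ({0..<n}-{m})) (x m) + (\<Sum>l\<in>{..<n}-{m}. y $ l * poly (Q x ({0..<n}-{l})) (x m))"
    using assms by (subst sum.remove[of _ m]) auto
  also have "(\<Sum>l\<in>{..<n}-{m}. y $ l * poly (Q x ({0..<n}-{l})) (x m)) = 0"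
    using assms by (intro sum.neutral) (auto simp: poly_Q_node)
  finally show ?thesis using EV_J[OF assms(1)] by simp
qed

lemma P_div: assumes "\<And>i j. i < n \<Longrightarrow> j < n \<Longrightarrow> i \<noteq> j \<Longrightarrow> x i \<noteq> x j" "m < n" "v < n" "m \<noteq> v"
  shows "poly (Q x ({0..<n}-{m}-{v})) (x m) = poly (Q x ({0..<n}-{m})) (x m) / (x m - x v)"
proof -
  have "poly (Q x ({0..<n}-{m})) (x m) = (x m - x v) * poly (Q x ({0..<n}-{m}-{v})) (x m)"
    using assms by (subst Q_split[of _ v]) (auto simp: algebra_simps)
  moreover have "x m - x v \<noteq> 0" using assms by auto
  ultimately show ?thesis by simp
qed

lemma double_sum: assumes "m < n"
  shows "(\<Sum>k<n. \<Sum>l<n. (if l = k then 0 else poly (Q x ({0..<n}-{k}-{l})) (x m)) * d l * d k)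
     = 2 * d m * (\<Sum>v\<in>{0..<n}-{m}. poly (Q x ({0..<n}-{m}-{v})) (x m) * d v)"
proof -
  define P where "P k l = poly (Q x ({0..<n}-{k}-{l})) (x m)" for k l
  have Psym: "P k l = P l k" for k l unfolding P_def by (simp add: Diff_insert2[symmetric] insert_commute)
  have P0: "P k l = 0" if "k \<noteq> m" "l \<noteq> m" for k l
    unfolding P_def using that assms by (intro poly_Q_node) auto
  define g where "g k l = (if l = k then 0 else P k l) * d l * d k" for k l
  have inner_m: "(\<Sum>l<n. g m l) = d m * (\<Sum>v\<in>{0..<n}-{m}. P m v * d v)"
  proof -
    have "(\<Sum>l<n. g m l) = g m m + (\<Sum>l\<in>{..<n}-{m}. g m l)"
      using assms by (subst sum.remove[of _ m]) auto
    also have "\<dots> = (\<Sum>l\<in>{0..<n}-{m}. P m l * d l * d m)"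
      unfolding g_def by (simp add: atLeast0LessThan)
    finally show ?thesis by (simp add: sum_distrib_left mult_ac)
  qed
  have inner_k: "(\<Sum>l<n. g k l) = P m k * d k * d m" if "k \<noteq> m" "k < n" for k
  proof -
    have "(\<Sum>l<n. g k l) = g k m + (\<Sum>l\<in>{..<n}-{m}. g k l)"
      using assms by (subst sum.remove[of _ m]) auto
    also have "(\<Sum>l\<in>{..<n}-{m}. g k l) = 0"
      unfolding g_def using that by (intro sum.neutral) (auto simp: P0)
    finally show ?thesis unfolding g_def using that Psym[of k m] by (simp add: mult_ac)
  qed
  have "(\<Sum>k<n. \<Sum>l<n. g k l) = (\<Sum>l<n. g m l) + (\<Sum>k\<in>{..<n}-{m}. \<Sum>l<n. g k l)"
    using assms by (subst sum.remove[of _ m]) auto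
  also have "(\<Sum>k\<in>{..<n}-{m}. \<Sum>l<n. g k l) = (\<Sum>k\<in>{0..<n}-{m}. P m k * d k * d m)"
    by (subst atLeast0LessThan) (intro sum.cong refl inner_k, auto)
  finally show ?thesis unfolding g_def[symmetric] P_def[symmetric] inner_m
    by (simp add: sum_distrib_left sum_distrib_right mult_ac)
qed


theorem mainTheorem6:
  fixes n :: nat and a :: "nat \<Rightarrow> real" and x :: "nat \<Rightarrow> complex"
  assumes "n \<ge> 2"
    and "\<And>i j. i < n \<Longrightarrow> j < n \<Longrightarrow> i \<noteq> j \<Longrightarrow> x i \<noteq> x j"
  shows "invertible_mat (jac n a x) \<and>
    (\<forall>B \<in> carrier_mat n n. inverts_mat (jac n a x) B \<longrightarrow>
      (let d = B *\<^sub>v vec n (Fmap n a x) in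
         d = vec n (Wgt n a x) \<and>
         (\<forall>j<n. (B *\<^sub>v hess n a x d d) $ j =
            2 * Wgt n a x j * (\<Sum>\<nu>\<in>{0..<n} - {j}. Wgt n a x \<nu> / (x \<nu> - x j)))))"
proof -
  note dist = assms(2)
  define J where "J = jac n a x"
  have J: "J \<in> carrier_mat n n" unfolding J_def by (rule jac_carrier)
  define L where "L m = poly (Q x ({0..<n}-{m})) (x m)" for m
  have Lnz: "L m \<noteq> 0" if "m < n" for m unfolding L_def using L_nz[OF dist that] .
  have node: "EV n (J *\<^sub>v y) (x m) = - (y $ m * L m)" if "y \<in> carrier_vec n" "m < n" for y m
    unfolding J_def L_def using EV_J_node[OF that] .
  have inj: "y = 0\<^sub>v n" if "y \<in> carrier_vec n" "J *\<^sub>v y = 0\<^sub>v n" for y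
  proof (rule eq_vecI)
    show "dim_vec y = dim_vec (0\<^sub>v n)" using that by simp
    fix m assume "m < dim_vec (0\<^sub>v n)"
    then have m: "m < n" by simp
    have "EV n (J *\<^sub>v y) (x m) = 0" unfolding that(2) EV_def using m by simp
    then have "y $ m * L m = 0" using node[OF that(1) m] by simp
    then show "y $ m = 0\<^sub>v n $ m" using Lnz[OF m] m by simp
  qed
  have det: "det J \<noteq> 0"
    using inj unfolding det_0_iff_vec_prod_zero_field[OF J] by blast
  from det_non_zero_imp_unit[OF J det, of "()"]
  obtain C where C: "C \<in> carrier_mat n n" "J * C = 1\<^sub>m n" "C * J = 1\<^sub>m n"
    unfolding Units_def ring_mat_def by auto
  have inv: "invertible_mat J"
    unfolding invertible_mat_def inverts_mat_def square_mat.simps using J C by auto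
  have sol: "\<forall>B \<in> carrier_mat n n. inverts_mat J B \<longrightarrow>
      (let d = B *\<^sub>v vec n (Fmap n a x) in
         d = vec n (Wgt n a x) \<and>
         (\<forall>j<n. (B *\<^sub>v hess n a x d d) $ j =
            2 * Wgt n a x j * (\<Sum>\<nu>\<in>{0..<n} - {j}. Wgt n a x \<nu> / (x \<nu> - x j))))"
  proof (intro ballI impI)
    fix B assume B: "B \<in> carrier_mat n n" and "inverts_mat J B"
    then have JB: "J * B = 1\<^sub>m n" unfolding inverts_mat_def using J by simp
    have bk: "J *\<^sub>v (B *\<^sub>v v) = v" if "v \<in> carrier_vec n" for v
      using J B that JB by (simp flip: assoc_mult_mat_vec)
    have nodeB: "- ((B *\<^sub>v v) $ m * L m) = EV n v (x m)" if "v \<in> carrier_vec n" "m < n" for v m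
      using node[of "B *\<^sub>v v" m] bk[OF that(1)] B that by simp
    have WL: "Wgt n a x m = ppoly n a (x m) / L m" for m
      unfolding Wgt_def L_def poly_Q ..
    define d where "d = B *\<^sub>v vec n (Fmap n a x)"
    have d: "d = vec n (Wgt n a x)"
    proof (rule eq_vecI)
      show "dim_vec d = dim_vec (vec n (Wgt n a x))" using B unfolding d_def by simp
      fix m assume "m < dim_vec (vec n (Wgt n a x))"
      then have m: "m < n" by simp
      have "- (d $ m * L m) = - ppoly n a (x m)"
        unfolding d_def nodeB[OF vec_carrier m] EV_F using m by (simp add: poly_Q_node)
      then have "d $ m = ppoly n a (x m) / L m" using Lnz[OF m] by (simp add: field_simps)
      then show "d $ m = vec n (Wgt n a x) $ m" using m WL by simp
    qed
    have dc: "d \<in> carrier_vec n" unfolding d by simp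
    have hc: "hess n a x d d \<in> carrier_vec n" unfolding hess_def by simp
    have hj: "(B *\<^sub>v hess n a x d d) $ j =
            2 * Wgt n a x j * (\<Sum>\<nu>\<in>{0..<n} - {j}. Wgt n a x \<nu> / (x \<nu> - x j))" if j: "j < n" for j
    proof -
      have "- ((B *\<^sub>v hess n a x d d) $ j * L j) = EV n (hess n a x d d) (x j)"
        by (rule nodeB[OF hc j])
      also have "\<dots> = 2 * d $ j * (\<Sum>v\<in>{0..<n}-{j}. poly (Q x ({0..<n}-{j}-{v})) (x j) * d $ v)"
        unfolding EV_H[OF dc] by (rule double_sum[OF j])
      also have "\<dots> = 2 * d $ j * (\<Sum>v\<in>{0..<n}-{j}. L j / (x j - x v) * d $ v)"
      proof -
        have "poly (Q x ({0..<n}-{j}-{v})) (x j) * d $ v = L j / (x j - x v) * d $ v"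
          if "v \<in> {0..<n}-{j}" for v
          unfolding L_def using that P_div[of n x j v, OF dist j] by auto
        then show ?thesis by (intro arg_cong[where f="\<lambda>s. 2 * d $ j * s"] sum.cong refl)
      qed
      also have "\<dots> = - (2 * d $ j * (\<Sum>v\<in>{0..<n}-{j}. d $ v / (x v - x j))) * L j"
        by (simp add: sum_distrib_left sum_distrib_right sum_negf[symmetric] field_simps) (simp add: minus_divide_right)
      finally have "(B *\<^sub>v hess n a x d d) $ j = 2 * d $ j * (\<Sum>v\<in>{0..<n}-{j}. d $ v / (x v - x j))"
        using Lnz[OF j] by simp
      then show ?thesis unfolding d using j by simp
    qed
    show "let d = B *\<^sub>v vec n (Fmap n a x) in
         d = vec n (Wgt n a x) \<and>
         (\<forall>j<n. (B *\<^sub>v hess n a x d d) $ j =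
            2 * Wgt n a x j * (\<Sum>\<nu>\<in>{0..<n} - {j}. Wgt n a x \<nu> / (x \<nu> - x j)))"
      unfolding Let_def d_def[symmetric] using d hj by blast
  qed
  show ?thesis using inv sol unfolding J_def by blast
qed

end
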